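(* Let $M=\{u=F(z,\bar z)\}\subset\mathbb{C}^2$ be a rigid real-analytic hypersurface passing through the origin with $F_{z\bar z}$ nowhere vanishing near $0$. Then $M$ is (locally near the origin) rigidly biholomorphically equivalent to the Heisenberg sphere $\{u'=z'\bar z'\}$ if and only if $$0\equiv \mathbf{R}(F)=\frac{F_{zz\bar z\bar z}F_{z\bar z}-F_{zz\bar z}F_{z\bar z\bar z}}{(F_{z\bar z})^2},\quad\text{i.e.}\quad F_{zz\bar z\bar z}F_{z\bar z}-F_{zz\bar z}F_{z\bar z\bar z}\equiv0 .$$
   Context: Coordinates on $\mathbb{C}^2$ are $(z,w)$, $w=u+iv$. A rigid hypersurface is one graphed as $u=F(z,\bar z)$ with $F$ real-valued real-analytic. A rigid biholomorphism is a local biholomorphism of the form $(z,w)\mapsto(f(z),aw+g(z))$ with $f,g$ holomorphic and $a\in\mathbb{R}\setminus\{0\}$. *)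

theory Defs
  imports "HOL-Analysis.Analysis"
begin

definition pdx :: "(complex \<Rightarrow> complex) \<Rightarrow> complex \<Rightarrow> complex" where
  "pdx f z = vector_derivative (\<lambda>t::real. f (z + of_real t)) (at 0)"

definition pdy :: "(complex \<Rightarrow> complex) \<Rightarrow> complex \<Rightarrow> complex" where
  "pdy f z = vector_derivative (\<lambda>t::real. f (z + \<i> * of_real t)) (at 0)"

definition dz :: "(complex \<Rightarrow> complex) \<Rightarrow> complex \<Rightarrow> complex" where
  "dz f z = (pdx f z - \<i> * pdy f z) / 2"

definition dzb :: "(complex \<Rightarrow> complex) \<Rightarrow> complex \<Rightarrow> complex" where
  "dzb f z = (pdx f z + \<i> * pdy f z) / 2"

definition real_analytic_near0 :: "(complex \<Rightarrow> real) \<Rightarrow> bool" where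
  "real_analytic_near0 F \<longleftrightarrow> (\<exists>r>0. \<exists>c :: nat \<Rightarrow> nat \<Rightarrow> complex.
      \<forall>z\<in>ball 0 r. ((\<lambda>(j,k). c j k * z ^ j * cnj z ^ k) has_sum complex_of_real (F z)) UNIV)"

definition rigid_hyp :: "(complex \<Rightarrow> real) \<Rightarrow> (complex \<times> complex) set" where
  "rigid_hyp F = {(z, w). Re w = F z}"

definition heisenberg :: "(complex \<times> complex) set" where
  "heisenberg = {(z, w). Re w = (cmod z)\<^sup>2}"

definition rigid_map :: "(complex \<Rightarrow> complex) \<Rightarrow> real \<Rightarrow> (complex \<Rightarrow> complex)
    \<Rightarrow> complex \<times> complex \<Rightarrow> complex \<times> complex" where
  "rigid_map f a g = (\<lambda>(z, w). (f z, complex_of_real a * w + g z))"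

text \<open>Local rigid biholomorphic equivalence of the germ of \<open>M\<close> at 0 with the sphere:
  a rigid map, biholomorphic on \<open>U \<times> \<complex>\<close> (\<open>f\<close> injective holomorphic on an open \<open>U \<ni> 0\<close>,
  \<open>a \<noteq> 0\<close>), sending \<open>M \<inter> (U \<times> \<complex>)\<close> into the Heisenberg sphere.\<close>
definition rigidly_equiv_sphere_at0 :: "(complex \<Rightarrow> real) \<Rightarrow> bool" where
  "rigidly_equiv_sphere_at0 F \<longleftrightarrow> (\<exists>U f g a. open U \<and> 0 \<in> U \<and> f holomorphic_on U \<and>
      inj_on f U \<and> g holomorphic_on U \<and> a \<noteq> 0 \<and>
      rigid_map f a g ` (rigid_hyp F \<inter> (U \<times> UNIV)) \<subseteq> heisenberg)"

end

theory Submission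
  imports Defs "HOL-Complex_Analysis.Complex_Analysis"
begin


definition Mc :: "(nat \<Rightarrow> nat \<Rightarrow> complex) \<Rightarrow> nat \<Rightarrow> real" where
  "Mc c n = (\<Sum>j\<le>n. cmod (c j (n - j)))"
definition Pc :: "(nat \<Rightarrow> nat \<Rightarrow> complex) \<Rightarrow> nat \<Rightarrow> complex \<Rightarrow> complex" where
  "Pc c n z = (\<Sum>j\<le>n. c j (n - j) * z ^ j * cnj z ^ (n - j))"
definition Sc :: "(nat \<Rightarrow> nat \<Rightarrow> complex) \<Rightarrow> complex \<Rightarrow> complex" where
  "Sc c z = (\<Sum>n. Pc c n z)"
definition convc :: "(nat \<Rightarrow> nat \<Rightarrow> complex) \<Rightarrow> real \<Rightarrow> bool" where
  "convc c r \<longleftrightarrow> (\<forall>\<rho>. 0 \<le> \<rho> \<longrightarrow> \<rho> < r \<longrightarrow> summable (\<lambda>n. Mc c n * \<rho> ^ n))"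
definition D1 :: "(nat \<Rightarrow> nat \<Rightarrow> complex) \<Rightarrow> nat \<Rightarrow> nat \<Rightarrow> complex" where
  "D1 c j k = of_nat (Suc j) * c (Suc j) k"
definition D2 :: "(nat \<Rightarrow> nat \<Rightarrow> complex) \<Rightarrow> nat \<Rightarrow> nat \<Rightarrow> complex" where
  "D2 c j k = of_nat (Suc k) * c j (Suc k)"
definition Ac :: "(nat \<Rightarrow> nat \<Rightarrow> complex) \<Rightarrow> nat \<Rightarrow> complex \<Rightarrow> complex" where
  "Ac c n z = (\<Sum>j\<le>n. c j (n - j) * (of_nat j * z ^ (j - 1)) * cnj z ^ (n - j))"
definition Bc :: "(nat \<Rightarrow> nat \<Rightarrow> complex) \<Rightarrow> nat \<Rightarrow> complex \<Rightarrow> complex" where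
  "Bc c n z = (\<Sum>j\<le>n. c j (n - j) * z ^ j * (of_nat (n - j) * cnj z ^ (n - j - 1)))"

lemma D12: "D1 (D2 c) = D2 (D1 c)"
  by (auto simp: D1_def D2_def fun_eq_iff)

lemma Mc_nonneg: "0 \<le> Mc c n"
  by (simp add: Mc_def sum_nonneg)

lemma Pc_bound: "cmod (Pc c n z) \<le> Mc c n * cmod z ^ n"
proof -
  have "cmod (Pc c n z) \<le> (\<Sum>j\<le>n. cmod (c j (n - j) * z ^ j * cnj z ^ (n - j)))"
    unfolding Pc_def by (rule norm_sum)
  also have "\<dots> = (\<Sum>j\<le>n. cmod (c j (n - j)) * cmod z ^ n)"
    by (intro sum.cong refl) (simp add: norm_mult norm_power power_add[symmetric])
  finally show ?thesis by (simp add: Mc_def sum_distrib_right)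
qed

lemma Ac_bound: assumes "cmod z \<le> \<rho>"
  shows "cmod (Ac c n z) \<le> of_nat n * Mc c n * \<rho> ^ (n - 1)"
proof -
  have "cmod (Ac c n z) \<le> (\<Sum>j\<le>n. cmod (c j (n - j) * (of_nat j * z ^ (j - 1)) * cnj z ^ (n - j)))"
    unfolding Ac_def by (rule norm_sum)
  also have "\<dots> \<le> (\<Sum>j\<le>n. cmod (c j (n - j)) * (of_nat n * \<rho> ^ (n - 1)))"
  proof (intro sum_mono)
    fix j assume j: "j \<in> {..n}"
    show "cmod (c j (n - j) * (of_nat j * z ^ (j - 1)) * cnj z ^ (n - j)) \<le> cmod (c j (n - j)) * (of_nat n * \<rho> ^ (n - 1))"
    proof (cases "j = 0")
      case True
      have "0 \<le> \<rho>" using assms norm_ge_zero order_trans by blast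
      then show ?thesis using True by (simp add: zero_le_mult_iff)
    next
      case False
      have "cmod (c j (n - j) * (of_nat j * z ^ (j - 1)) * cnj z ^ (n - j)) = cmod (c j (n - j)) * (of_nat j * cmod z ^ (n - 1))"
        using False j by (simp add: norm_mult norm_power power_add[symmetric])
      also have "\<dots> \<le> cmod (c j (n - j)) * (of_nat n * \<rho> ^ (n - 1))"
        using j assms by (intro mult_left_mono mult_mono power_mono) auto
      finally show ?thesis .
    qed
  qed
  also have "\<dots> = Mc c n * (of_nat n * \<rho> ^ (n - 1))" by (simp add: Mc_def sum_distrib_right)
  finally show ?thesis by (simp add: mult_ac)
qed

lemma Bc_bound: assumes "cmod z \<le> \<rho>"
  shows "cmod (Bc c n z) \<le> of_nat n * Mc c n * \<rho> ^ (n - 1)"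
proof -
  have "cmod (Bc c n z) \<le> (\<Sum>j\<le>n. cmod (c j (n - j) * z ^ j * (of_nat (n - j) * cnj z ^ (n - j - 1))))"
    unfolding Bc_def by (rule norm_sum)
  also have "\<dots> \<le> (\<Sum>j\<le>n. cmod (c j (n - j)) * (of_nat n * \<rho> ^ (n - 1)))"
  proof (intro sum_mono)
    fix j assume j: "j \<in> {..n}"
    show "cmod (c j (n - j) * z ^ j * (of_nat (n - j) * cnj z ^ (n - j - 1))) \<le> cmod (c j (n - j)) * (of_nat n * \<rho> ^ (n - 1))"
    proof (cases "j = n")
      case True
      have "0 \<le> \<rho>" using assms norm_ge_zero order_trans by blast
      then show ?thesis using True by (simp add: zero_le_mult_iff)
    next
      case False
      have e: "cmod z ^ j * cmod z ^ (n - j - 1) = cmod z ^ (n-1)"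
        using False j by (simp add: power_add[symmetric])
      have "cmod (c j (n - j) * z ^ j * (of_nat (n - j) * cnj z ^ (n - j - 1))) = cmod (c j (n - j)) * (of_nat (n - j) * (cmod z ^ j * cmod z ^ (n - j - 1)))"
        by (simp only: norm_mult norm_power complex_mod_cnj norm_of_nat) (simp add: mult_ac)
      also have "\<dots> = cmod (c j (n - j)) * (of_nat (n - j) * cmod z ^ (n - 1))" by (simp only: e)
      also have "\<dots> \<le> cmod (c j (n - j)) * (of_nat n * \<rho> ^ (n - 1))"
        using j assms by (intro mult_left_mono mult_mono power_mono) auto
      finally show ?thesis .
    qed
  qed
  also have "\<dots> = Mc c n * (of_nat n * \<rho> ^ (n - 1))" by (simp add: Mc_def sum_distrib_right)
  finally show ?thesis by (simp add: mult_ac)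
qed

lemma Ac_Suc: "Ac c (Suc n) z = Pc (D1 c) n z"
  unfolding Ac_def Pc_def D1_def
  by (subst sum.atMost_Suc_shift) (simp add: mult_ac)

lemma Ac_0: "Ac c 0 z = 0" by (simp add: Ac_def)

lemma Bc_Suc: "Bc c (Suc n) z = Pc (D2 c) n z"
  unfolding Bc_def Pc_def D2_def
  by (subst sum.atMost_Suc) (auto intro!: sum.cong simp: Suc_diff_le mult_ac)

lemma Bc_0: "Bc c 0 z = 0" by (simp add: Bc_def)

lemma convc_mono: "convc c r \<Longrightarrow> r' \<le> r \<Longrightarrow> convc c r'"
  unfolding convc_def by auto

lemma convc_summable_norm:
  assumes "convc c r" "cmod z < r"
  shows "summable (\<lambda>n. cmod (Pc c n z))"
proof (rule summable_comparison_test[OF _ assms(1)[unfolded convc_def, rule_format, of "cmod z"]])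
  show "\<exists>N. \<forall>n\<ge>N. norm (cmod (Pc c n z)) \<le> Mc c n * cmod z ^ n"
    using Pc_bound by auto
qed (use assms in auto)

lemma convc_sums:
  assumes "convc c r" "cmod z < r"
  shows "(\<lambda>n. Pc c n z) sums Sc c z"
  unfolding Sc_def using summable_norm_cancel[OF convc_summable_norm[OF assms]]
  by (rule summable_sums)

lemma convc_diffs:
  assumes "convc c r" "0 \<le> \<rho>" "\<rho> < r"
  shows "summable (\<lambda>n. diffs (Mc c) n * \<rho> ^ n)"
proof (rule termdiff_converges[where K="(\<rho> + r)/2"])
  show "norm \<rho> < (\<rho> + r)/2" using assms by auto
  fix x :: real assume x: "norm x < (\<rho> + r)/2"
  have "summable (\<lambda>n. Mc c n * \<bar>x\<bar> ^ n)"
    using assms x unfolding convc_def by auto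
  then show "summable (\<lambda>n. Mc c n * x ^ n)"
    by (rule summable_comparison_test[rotated])
       (auto simp: abs_mult power_abs Mc_nonneg)
qed

lemma convc_deriv_bound:
  assumes "convc c r" "0 \<le> \<rho>" "\<rho> < r"
  shows "summable (\<lambda>n. of_nat n * Mc c n * \<rho> ^ (n - 1))"
proof -
  have "summable (\<lambda>n. of_nat (Suc n) * Mc c (Suc n) * \<rho> ^ (Suc n - 1))"
    using convc_diffs[OF assms] by (simp add: diffs_def)
  then show ?thesis by (subst summable_Suc_iff[symmetric])
qed

lemma convc_D1:
  assumes "convc c r" shows "convc (D1 c) r"
  unfolding convc_def
proof (intro allI impI)
  fix \<rho> :: real assume r: "0 \<le> \<rho>" "\<rho> < r"
  have le: "Mc (D1 c) n \<le> diffs (Mc c) n" for n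
  proof -
    have "Mc (D1 c) n = (\<Sum>j\<le>n. of_nat (Suc j) * cmod (c (Suc j) (n - j)))"
      by (simp only: Mc_def D1_def norm_mult norm_of_nat)
    also have "\<dots> \<le> (\<Sum>j\<le>n. of_nat (Suc n) * cmod (c (Suc j) (n - j)))"
      by (intro sum_mono mult_right_mono) auto
    also have "\<dots> = of_nat (Suc n) * (\<Sum>j\<le>n. cmod (c (Suc j) (n - j)))"
      by (simp add: sum_distrib_left)
    also have "\<dots> \<le> of_nat (Suc n) * Mc c (Suc n)"
    proof -
      have "Mc c (Suc n) = cmod (c 0 (Suc n)) + (\<Sum>j\<le>n. cmod (c (Suc j) (n - j)))"
        unfolding Mc_def by (subst sum.atMost_Suc_shift) simp
      then show ?thesis by (auto intro!: mult_left_mono)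
    qed
    finally show ?thesis by (simp add: diffs_def)
  qed
  show "summable (\<lambda>n. Mc (D1 c) n * \<rho> ^ n)"
    by (rule summable_comparison_test[OF _ convc_diffs[OF assms r]])
       (use le r in \<open>auto intro!: mult_right_mono simp: Mc_nonneg\<close>)
qed

lemma convc_D2:
  assumes "convc c r" shows "convc (D2 c) r"
  unfolding convc_def
proof (intro allI impI)
  fix \<rho> :: real assume r: "0 \<le> \<rho>" "\<rho> < r"
  have le: "Mc (D2 c) n \<le> diffs (Mc c) n" for n
  proof -
    have "Mc (D2 c) n = (\<Sum>j\<le>n. of_nat (Suc (n - j)) * cmod (c j (Suc (n - j))))"
      by (simp only: Mc_def D2_def norm_mult norm_of_nat)
    also have "\<dots> \<le> (\<Sum>j\<le>n. of_nat (Suc n) * cmod (c j (Suc n - j)))"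
      by (intro sum_mono mult_mono) (auto simp: Suc_diff_le)
    also have "\<dots> = of_nat (Suc n) * (\<Sum>j\<le>n. cmod (c j (Suc n - j)))"
      by (simp add: sum_distrib_left)
    also have "\<dots> \<le> of_nat (Suc n) * Mc c (Suc n)"
      unfolding Mc_def sum.atMost_Suc by (auto intro!: mult_left_mono)
    finally show ?thesis by (simp add: diffs_def)
  qed
  show "summable (\<lambda>n. Mc (D2 c) n * \<rho> ^ n)"
    by (rule summable_comparison_test[OF _ convc_diffs[OF assms r]])
       (use le r in \<open>auto intro!: mult_right_mono simp: Mc_nonneg\<close>)
qed

lemma term_deriv:
  "((\<lambda>z. a * z^j * cnj z^k) has_derivative
     (\<lambda>h. a * (of_nat j * z^(j-1)) * cnj z^k * h + a * z^j * (of_nat k * cnj z^(k-1)) * cnj h)) (at z)"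
  by (rule has_derivative_eq_rhs, (rule derivative_intros)+) (auto simp: algebra_simps)

lemma Pc_deriv: "((Pc c n) has_derivative (\<lambda>h. Ac c n z * h + Bc c n z * cnj h)) (at z)"
proof -
  have "((\<lambda>z. \<Sum>j\<le>n. c j (n - j) * z ^ j * cnj z ^ (n - j)) has_derivative
     (\<lambda>h. \<Sum>j\<le>n. c j (n - j) * (of_nat j * z^(j-1)) * cnj z^(n - j) * h + c j (n - j) * z^j * (of_nat (n - j) * cnj z^(n - j - 1)) * cnj h)) (at z)"
    by (intro has_derivative_sum term_deriv)
  then show ?thesis
    unfolding Pc_def Ac_def Bc_def
    by (rule has_derivative_eq_rhs) (simp add: fun_eq_iff sum.distrib sum_distrib_right)
qed

lemma Ac_sums:
  assumes "convc c r" "cmod z < r"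
  shows "(\<lambda>n. Ac c n z) sums Sc (D1 c) z"
proof -
  have "(\<lambda>n. Ac c (Suc n) z) sums Sc (D1 c) z"
    unfolding Ac_Suc by (rule convc_sums[OF convc_D1[OF assms(1)] assms(2)])
  then show ?thesis using sums_Suc_iff[of "\<lambda>n. Ac c n z"] by (simp add: Ac_0)
qed

lemma Bc_sums:
  assumes "convc c r" "cmod z < r"
  shows "(\<lambda>n. Bc c n z) sums Sc (D2 c) z"
proof -
  have "(\<lambda>n. Bc c (Suc n) z) sums Sc (D2 c) z"
    unfolding Bc_Suc by (rule convc_sums[OF convc_D2[OF assms(1)] assms(2)])
  then show ?thesis using sums_Suc_iff[of "\<lambda>n. Bc c n z"] by (simp add: Bc_0)
qed

lemma Sc_has_derivative:
  assumes c: "convc c r" and z: "cmod z < r"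
  shows "(Sc c has_derivative (\<lambda>h. Sc (D1 c) z * h + Sc (D2 c) z * cnj h)) (at z)"
proof -
  define \<rho> where "\<rho> = (cmod z + r)/2"
  have z0: "0 \<le> cmod z" by simp
  have r0: "0 < r" using z z0 by linarith
  have \<rho>1: "0 \<le> \<rho>" unfolding \<rho>_def using r0 z0 by simp
  have \<rho>2: "\<rho> < r" unfolding \<rho>_def using z by (simp add: field_simps)
  have \<rho>3: "cmod z < \<rho>" unfolding \<rho>_def using z by (simp add: field_simps)
  note \<rho> = \<rho>1 \<rho>2 \<rho>3
  define S where "S = ball (0::complex) \<rho>"
  have inS: "x \<in> S \<Longrightarrow> cmod x < r" for x using \<rho> by (auto simp: S_def)
  have bnd: "summable (\<lambda>n. of_nat n * Mc c n * \<rho> ^ (n - 1))"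
    by (rule convc_deriv_bound[OF c \<rho>(1,2)])
  have ulA: "uniform_limit S (\<lambda>n x. \<Sum>i<n. Ac c i x) (\<lambda>x. \<Sum>i. Ac c i x) sequentially"
    by (rule Weierstrass_m_test_ev[OF _ bnd]) (intro always_eventually allI ballI Ac_bound, auto simp: S_def)
  have ulB: "uniform_limit S (\<lambda>n x. \<Sum>i<n. Bc c i x) (\<lambda>x. \<Sum>i. Bc c i x) sequentially"
    by (rule Weierstrass_m_test_ev[OF _ bnd]) (intro always_eventually allI ballI Bc_bound, auto simp: S_def)
  have eqA: "(\<Sum>i. Ac c i x) = Sc (D1 c) x" if "x \<in> S" for x
    using Ac_sums[OF c inS[OF that]] by (simp add: sums_iff)
  have eqB: "(\<Sum>i. Bc c i x) = Sc (D2 c) x" if "x \<in> S" for x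
    using Bc_sums[OF c inS[OF that]] by (simp add: sums_iff)
  have "\<exists>g. \<forall>x\<in>S. (\<lambda>n. Pc c n x) sums (g x) \<and>
      (g has_derivative (\<lambda>h. Sc (D1 c) x * h + Sc (D2 c) x * cnj h)) (at x within S)"
  proof (rule has_derivative_series[where x=z])
    show "convex S" by (simp add: S_def)
    show "z \<in> S" using \<rho> by (simp add: S_def)
    show "(\<lambda>n. Pc c n z) sums Sc c z" by (rule convc_sums[OF c z])
    show "((Pc c n) has_derivative (\<lambda>h. Ac c n x * h + Bc c n x * cnj h)) (at x within S)" for n x
      using Pc_deriv has_derivative_at_withinI by blast
    fix e :: real assume e: "e > 0"
    have "\<forall>\<^sub>F n in sequentially. \<forall>x\<in>S. dist (\<Sum>i<n. Ac c i x) (\<Sum>i. Ac c i x) < e/2"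
      using uniform_limitD[OF ulA, of "e/2"] e by simp
    moreover have "\<forall>\<^sub>F n in sequentially. \<forall>x\<in>S. dist (\<Sum>i<n. Bc c i x) (\<Sum>i. Bc c i x) < e/2"
      using uniform_limitD[OF ulB, of "e/2"] e by simp
    ultimately show "\<forall>\<^sub>F n in sequentially. \<forall>x\<in>S. \<forall>h. norm ((\<Sum>i<n. Ac c i x * h + Bc c i x * cnj h) - (Sc (D1 c) x * h + Sc (D2 c) x * cnj h)) \<le> e * norm h"
    proof eventually_elim
      case (elim n)
      show ?case
      proof (intro ballI allI)
        fix x h assume x: "x \<in> S"
        have "(\<Sum>i<n. Ac c i x * h + Bc c i x * cnj h) - (Sc (D1 c) x * h + Sc (D2 c) x * cnj h)
            = ((\<Sum>i<n. Ac c i x) - (\<Sum>i. Ac c i x)) * h + ((\<Sum>i<n. Bc c i x) - (\<Sum>i. Bc c i x)) * cnj h"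
          using eqA[OF x] eqB[OF x] by (simp add: sum.distrib sum_distrib_right sum_distrib_left algebra_simps)
        also have "norm \<dots> \<le> norm ((\<Sum>i<n. Ac c i x) - (\<Sum>i. Ac c i x)) * norm h + norm ((\<Sum>i<n. Bc c i x) - (\<Sum>i. Bc c i x)) * norm h"
          by (rule order_trans[OF norm_triangle_ineq]) (simp add: norm_mult)
        also have "\<dots> \<le> (e/2) * norm h + (e/2) * norm h"
          using elim x by (intro add_mono mult_right_mono) (auto simp: dist_norm less_imp_le)
        finally show "norm ((\<Sum>i<n. Ac c i x * h + Bc c i x * cnj h) - (Sc (D1 c) x * h + Sc (D2 c) x * cnj h)) \<le> e * norm h"
          by simp
      qed
    qed
  qed
  then obtain g where g: "\<And>x. x \<in> S \<Longrightarrow> (\<lambda>n. Pc c n x) sums (g x) \<and>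
      (g has_derivative (\<lambda>h. Sc (D1 c) x * h + Sc (D2 c) x * cnj h)) (at x within S)"
    by blast
  have zS: "z \<in> S" using \<rho> by (simp add: S_def)
  have gS: "g x = Sc c x" if "x \<in> S" for x
    using g[OF that] convc_sums[OF c inS[OF that]] sums_unique2 by blast
  have "(g has_derivative (\<lambda>h. Sc (D1 c) z * h + Sc (D2 c) z * cnj h)) (at z)"
    using g[OF zS] at_within_open[OF zS] by (simp add: S_def)
  then show ?thesis
    by (rule has_derivative_transform_within_open[OF _ _ zS]) (auto simp: S_def gS)
qed

lemma has_sum_diag_sums:
  fixes g :: "nat \<times> nat \<Rightarrow> 'a::{banach,uniform_topological_group_add}"
  assumes "(g has_sum s) UNIV"
  shows "(\<lambda>n. \<Sum>j\<le>n. g (j, n - j)) sums s"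
proof -
  have bij: "bij_betw (\<lambda>(n::nat, j::nat). (j, n - j)) (SIGMA n:UNIV. {..n}) UNIV"
    by (rule bij_betw_byWitness[where f'="\<lambda>(j, k). (j + k, j)"]) auto
  have "((\<lambda>x. g ((\<lambda>(n, j). (j, n - j)) x)) has_sum s) (SIGMA n:UNIV. {..n})"
    using has_sum_reindex_bij_betw[OF bij, of g s] assms by simp
  then have "((\<lambda>n. \<Sum>j\<le>n. g (j, n - j)) has_sum s) UNIV"
  proof (rule has_sum_Sigma'[where b="\<lambda>n. \<Sum>j\<le>n. g (j, n - j)"])
    show "((\<lambda>j. g (case (n, j) of (n, j) \<Rightarrow> (j, n - j))) has_sum (\<Sum>j\<le>n. g (j, n - j))) {..n}" for n
      using has_sum_finite[of "{..n}" "\<lambda>j. g (j, n - j)"] by simp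
  qed
  then show ?thesis by (rule has_sum_imp_sums)
qed

lemma analytic_convc:
  assumes "real_analytic_near0 F"
  shows "\<exists>c r. r > 0 \<and> convc c r \<and> (\<forall>z\<in>ball 0 r. complex_of_real (F z) = Sc c z)"
proof -
  obtain r c where r: "r > 0" and hs: "\<And>z. z \<in> ball 0 r \<Longrightarrow>
      ((\<lambda>(j,k). c j k * z ^ j * cnj z ^ k) has_sum complex_of_real (F z)) UNIV"
    using assms unfolding real_analytic_near0_def by blast
  have conv: "convc c r"
    unfolding convc_def
  proof (intro allI impI)
    fix \<rho> :: real assume \<rho>: "0 \<le> \<rho>" "\<rho> < r"
    have "complex_of_real \<rho> \<in> ball 0 r" using \<rho> by simp
    from hs[OF this] have "(\<lambda>(j,k). c j k * complex_of_real \<rho> ^ j * cnj (complex_of_real \<rho>) ^ k) summable_on UNIV"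
      by (rule has_sum_imp_summable)
    then have "(\<lambda>x. norm ((\<lambda>(j,k). c j k * complex_of_real \<rho> ^ j * cnj (complex_of_real \<rho>) ^ k) x)) summable_on UNIV"
      by (simp add: summable_on_iff_abs_summable_on_complex)
    then have "((\<lambda>x. norm ((\<lambda>(j,k). c j k * complex_of_real \<rho> ^ j * cnj (complex_of_real \<rho>) ^ k) x)) has_sum
        infsum (\<lambda>x. norm ((\<lambda>(j,k). c j k * complex_of_real \<rho> ^ j * cnj (complex_of_real \<rho>) ^ k) x)) UNIV) UNIV"
      by (rule summable_iff_has_sum_infsum[THEN iffD1])
    from has_sum_diag_sums[OF this] have "summable (\<lambda>n. \<Sum>j\<le>n. norm (c j (n - j) * complex_of_real \<rho> ^ j * cnj (complex_of_real \<rho>) ^ (n - j)))"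
      by (simp add: sums_iff)
    moreover have "(\<Sum>j\<le>n. norm (c j (n - j) * complex_of_real \<rho> ^ j * cnj (complex_of_real \<rho>) ^ (n - j))) = Mc c n * \<rho> ^ n" for n
      unfolding Mc_def sum_distrib_right
      by (intro sum.cong refl) (simp add: norm_mult norm_power \<rho>(1) power_add[symmetric])
    ultimately show "summable (\<lambda>n. Mc c n * \<rho> ^ n)" by simp
  qed
  have "complex_of_real (F z) = Sc c z" if z: "z \<in> ball 0 r" for z
  proof -
    have "(\<lambda>n. Pc c n z) sums complex_of_real (F z)"
      using has_sum_diag_sums[OF hs[OF z]] by (simp add: Pc_def)
    then show ?thesis by (simp add: Sc_def sums_iff)
  qed
  with r conv show ?thesis by blast
qed



definition wd :: "(complex \<Rightarrow> complex) \<Rightarrow> complex \<Rightarrow> complex \<Rightarrow> complex \<Rightarrow> bool" where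
  "wd u z a b \<longleftrightarrow> (u has_derivative (\<lambda>h. a * h + b * cnj h)) (at z)"

lemma wd_dz:
  assumes "wd u z a b"
  shows "dz u z = a" "dzb u z = b"
proof -
  have L: "(u has_derivative (\<lambda>h. a * h + b * cnj h)) (at (z + of_real 0))"
    using assms by (simp add: wd_def)
  have "((\<lambda>t::real. z + of_real t) has_derivative (\<lambda>t. of_real t)) (at 0)"
    by (rule has_derivative_eq_rhs, (rule derivative_intros)+) auto
  from has_derivative_compose[OF this L]
  have "((\<lambda>t. u (z + of_real t)) has_vector_derivative (a + b)) (at 0)"
    unfolding has_vector_derivative_def
    by (rule has_derivative_eq_rhs) (auto simp: fun_eq_iff scaleR_conv_of_real algebra_simps)
  then have px: "pdx u z = a + b" unfolding pdx_def by (rule vector_derivative_at)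
  have L2: "(u has_derivative (\<lambda>h. a * h + b * cnj h)) (at (z + \<i> * of_real 0))"
    using assms by (simp add: wd_def)
  have "((\<lambda>t::real. z + \<i> * of_real t) has_derivative (\<lambda>t. \<i> * of_real t)) (at 0)"
    by (rule has_derivative_eq_rhs, (rule derivative_intros)+) auto
  from has_derivative_compose[OF this L2]
  have "((\<lambda>t. u (z + \<i> * of_real t)) has_vector_derivative (\<i> * a - \<i> * b)) (at 0)"
    unfolding has_vector_derivative_def
    by (rule has_derivative_eq_rhs) (auto simp: fun_eq_iff scaleR_conv_of_real algebra_simps)
  then have py: "pdy u z = \<i> * a - \<i> * b" unfolding pdy_def by (rule vector_derivative_at)
  show "dz u z = a" unfolding dz_def px py by (simp add: algebra_simps)
  show "dzb u z = b" unfolding dzb_def px py by (simp add: algebra_simps)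
qed

lemma wd_of_has_derivative:
  assumes "(u has_derivative L) (at z)"
  shows "wd u z (dz u z) (dzb u z)"
proof -
  have lin: "linear L" using assms has_derivative_linear by blast
  define A where "A = (L 1 - \<i> * L \<i>) / 2"
  define B where "B = (L 1 + \<i> * L \<i>) / 2"
  have "L h = A * h + B * cnj h" for h
  proof -
    have "h = Re h *\<^sub>R 1 + Im h *\<^sub>R \<i>" by (simp add: complex_eq_iff)
    then have "L h = L (Re h *\<^sub>R 1 + Im h *\<^sub>R \<i>)" by simp
    also have "\<dots> = Re h *\<^sub>R L 1 + Im h *\<^sub>R L \<i>"
      using lin by (simp add: linear_add linear_scale)
    also have "\<dots> = A * h + B * cnj h"
    proof -
      have e: "A * (of_real x + \<i> * of_real y) + B * (of_real x - \<i> * of_real y) = of_real x * L 1 + of_real y * L \<i>" for x y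
        unfolding A_def B_def by (simp add: field_simps)
      have h1: "h = of_real (Re h) + \<i> * of_real (Im h)" by (simp add: complex_eq_iff)
      have h2: "cnj h = of_real (Re h) - \<i> * of_real (Im h)" by (simp add: complex_eq_iff)
      show ?thesis unfolding h2 by (subst h1) (simp add: e scaleR_conv_of_real)
    qed
    finally show ?thesis .
  qed
  then have "L = (\<lambda>h. A * h + B * cnj h)" by auto
  then have w: "wd u z A B" using assms by (simp add: wd_def)
  then show ?thesis using wd_dz[OF w] by simp
qed

lemma wd_add: "wd u z a b \<Longrightarrow> wd v z c d \<Longrightarrow> wd (\<lambda>x. u x + v x) z (a + c) (b + d)"
  unfolding wd_def by (rule has_derivative_eq_rhs, (rule has_derivative_add; assumption)) (auto simp: algebra_simps)
lemma wd_mult: "wd u z a b \<Longrightarrow> wd v z c d \<Longrightarrow> wd (\<lambda>x. u x * v x) z (a * v z + u z * c) (b * v z + u z * d)"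
  unfolding wd_def by (rule has_derivative_eq_rhs, (rule has_derivative_mult; assumption)) (auto simp: algebra_simps)

lemma wd_cnj: "wd u z a b \<Longrightarrow> wd (\<lambda>x. cnj (u x)) z (cnj b) (cnj a)"
  unfolding wd_def by (rule has_derivative_eq_rhs, (rule has_derivative_cnj; assumption)) (auto simp: algebra_simps)
lemma wd_const: "wd (\<lambda>x. k) z 0 0"
  unfolding wd_def by simp

lemma wd_holo: "(f has_field_derivative d) (at z) \<Longrightarrow> wd f z d 0"
  unfolding wd_def has_field_derivative_def by (erule has_derivative_eq_rhs) (simp add: fun_eq_iff)

lemma wd_comp: "(g has_field_derivative d) (at (u z)) \<Longrightarrow> wd u z a b \<Longrightarrow> wd (\<lambda>x. g (u x)) z (d * a) (d * b)"
  unfolding wd_def has_field_derivative_def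
  by (rule has_derivative_eq_rhs, (rule has_derivative_compose; assumption)) (auto simp: algebra_simps)

lemma wd_field: "wd u z a 0 \<Longrightarrow> (u has_field_derivative a) (at z)"
  unfolding wd_def has_field_derivative_def by (erule has_derivative_eq_rhs) (simp add: fun_eq_iff)
lemma wd_transform: "wd v z a b \<Longrightarrow> open S \<Longrightarrow> z \<in> S \<Longrightarrow> (\<And>x. x \<in> S \<Longrightarrow> v x = u x) \<Longrightarrow> wd u z a b"
  unfolding wd_def by (rule has_derivative_transform_within_open)

lemma wd_const_on:
  assumes "connected S" "open S" "\<And>x. x \<in> S \<Longrightarrow> wd u x 0 0"
  shows "u constant_on S"
proof (rule has_derivative_zero_connected_constant_on[OF assms(1,2) finite.emptyI])
  have d: "(u has_derivative (\<lambda>h. 0)) (at x)" if "x \<in> S" for x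
    using assms(3)[OF that] by (simp add: wd_def)
  show "continuous_on S u"
    by (intro continuous_at_imp_continuous_on ballI has_derivative_continuous[OF d])
  show "\<forall>x\<in>S - {}. (u has_derivative (\<lambda>h. 0)) (at x within S)"
    using d has_derivative_at_withinI by blast
qed

lemma wd_diff: "wd u z a b \<Longrightarrow> wd v z c d \<Longrightarrow> wd (\<lambda>x. u x - v x) z (a - c) (b - d)"
  unfolding wd_def by (rule has_derivative_eq_rhs, (rule has_derivative_diff; assumption)) (auto simp: algebra_simps)

lemma wd_unique: assumes "wd u z a b" "wd u z c d" shows "a = c \<and> b = d"
  using wd_dz[OF assms(1)] wd_dz[OF assms(2)] by metis

lemma wd_real:
  assumes "wd u z a b" "open S" "z \<in> S" "\<And>x. x \<in> S \<Longrightarrow> cnj (u x) = u x"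
  shows "b = cnj a"
proof -
  have "wd u z (cnj b) (cnj a)"
    by (rule wd_transform[OF wd_cnj[OF assms(1)] assms(2,3)]) (use assms(4) in auto)
  from wd_unique[OF assms(1) this] show ?thesis by blast
qed

lemma convc_wd:
  assumes "convc c r" "\<And>x. x \<in> ball 0 r \<Longrightarrow> u x = Sc c x" "z \<in> ball 0 r"
  shows "wd u z (Sc (D1 c) z) (Sc (D2 c) z)" "dz u z = Sc (D1 c) z" "dzb u z = Sc (D2 c) z"
proof -
  have "wd (Sc c) z (Sc (D1 c) z) (Sc (D2 c) z)"
    unfolding wd_def by (rule Sc_has_derivative[OF assms(1)]) (use assms(3) in simp)
  then show w: "wd u z (Sc (D1 c) z) (Sc (D2 c) z)"
    by (rule wd_transform[OF _ open_ball assms(3)]) (use assms(2) in auto)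
  show "dz u z = Sc (D1 c) z" "dzb u z = Sc (D2 c) z" using wd_dz[OF w] by auto
qed



lemma wd_cong: "wd u z a b \<Longrightarrow> a = a' \<Longrightarrow> b = b' \<Longrightarrow> wd u z a' b'"
  by simp

lemma wd_cmult: "wd u z a b \<Longrightarrow> wd (\<lambda>x. k * u x) z (k * a) (k * b)"
  by (rule wd_cong[OF wd_mult[OF wd_const]]) auto

lemma wd_on:
  assumes "open S" "\<And>x. x \<in> S \<Longrightarrow> u x = v x" "\<And>x. x \<in> S \<Longrightarrow> wd v x (p x) (q x)" "z \<in> S"
  shows "dz u z = p z" "dzb u z = q z" "wd u z (p z) (q z)"
proof -
  show w: "wd u z (p z) (q z)"
    by (rule wd_transform[OF assms(3)[OF assms(4)] assms(1,4)]) (use assms(2) in auto)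
  show "dz u z = p z" "dzb u z = q z" using wd_dz[OF w] by auto
qed

lemma wd_holo_on: "f holomorphic_on S \<Longrightarrow> open S \<Longrightarrow> x \<in> S \<Longrightarrow> wd f x (deriv f x) 0"
  by (rule wd_holo) (rule holomorphic_derivI)

lemma wd_cholo_on: "f holomorphic_on S \<Longrightarrow> open S \<Longrightarrow> x \<in> S \<Longrightarrow> wd (\<lambda>x. cnj (f x)) x 0 (cnj (deriv f x))"
  using wd_cnj[OF wd_holo_on] by fastforce

lemma forward_dir:
  fixes F :: "complex \<Rightarrow> real"
  assumes "rigidly_equiv_sphere_at0 F"
  defines "Fc \<equiv> (\<lambda>z. complex_of_real (F z))"
  shows "\<exists>r>0. \<forall>z\<in>ball 0 r.
       dz (dz (dzb (dzb Fc))) z * dz (dzb Fc) z - dz (dz (dzb Fc)) z * dz (dzb (dzb Fc)) z = 0"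
proof -
  obtain U f g a where U: "open U" "0 \<in> U" and hf: "f holomorphic_on U" and hg: "g holomorphic_on U"
    and a: "a \<noteq> 0" and img: "rigid_map f a g ` (rigid_hyp F \<inter> (U \<times> UNIV)) \<subseteq> heisenberg"
    using assms(1) unfolding rigidly_equiv_sphere_at0_def by blast
  have eq: "a * F z + Re (g z) = (cmod (f z))\<^sup>2" if z: "z \<in> U" for z
  proof -
    have "(z, complex_of_real (F z)) \<in> rigid_hyp F \<inter> (U \<times> UNIV)"
      using z by (simp add: rigid_hyp_def)
    then have "rigid_map f a g (z, complex_of_real (F z)) \<in> heisenberg" using img by blast
    then show ?thesis by (simp add: rigid_map_def heisenberg_def)
  qed
  define A where "A = inverse (complex_of_real a)"
  define B where "B = A / 2"
  define f1 where "f1 = deriv f"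
  define f2 where "f2 = deriv f1"
  define g1 where "g1 = deriv g"
  define g2 where "g2 = deriv g1"
  have hf1: "f1 holomorphic_on U" unfolding f1_def using hf U by (intro holomorphic_deriv)
  have hg1: "g1 holomorphic_on U" unfolding g1_def using hg U by (intro holomorphic_deriv)
  have hf2: "f2 holomorphic_on U" unfolding f2_def using hf1 U by (intro holomorphic_deriv)
  have hg2: "g2 holomorphic_on U" unfolding g2_def using hg1 U by (intro holomorphic_deriv)
  note wf = wd_holo_on[OF hf U(1)] and wcf = wd_cholo_on[OF hf U(1)]
  note wf1 = wd_holo_on[OF hf1 U(1)] and wcf1 = wd_cholo_on[OF hf1 U(1)]
  note wg = wd_holo_on[OF hg U(1)] and wcg = wd_cholo_on[OF hg U(1)]
  note wg1 = wd_holo_on[OF hg1 U(1)] and wcg1 = wd_cholo_on[OF hg1 U(1)]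
  define G where "G x = A * (f x * cnj (f x)) - B * g x - B * cnj (g x)" for x
  have FG: "Fc x = G x" if "x \<in> U" for x
  proof -
    have "F x = ((cmod (f x))\<^sup>2 - Re (g x)) / a"
      using eq[OF that] a by (simp add: field_simps)
    then have "complex_of_real (F x) = complex_of_real (((cmod (f x))\<^sup>2 - Re (g x)) / a)"
      by simp
    also have "\<dots> = A * (complex_of_real ((cmod (f x))\<^sup>2) - complex_of_real (Re (g x)))"
      by (simp add: A_def divide_inverse mult.commute)
    also have "\<dots> = G x"
    proof -
      have e: "complex_of_real (Re (g x)) = (g x + cnj (g x))/2" by (simp add: complex_add_cnj)
      show ?thesis unfolding G_def B_def complex_norm_square e by (simp add: algebra_simps)
    qed
    finally show ?thesis by (simp add: Fc_def)
  qed
  define G2 where "G2 x = A * (f x * cnj (f1 x)) - B * cnj (g1 x)" for x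
  have s1: "dzb Fc x = G2 x" if "x \<in> U" for x
  proof (rule wd_on(2)[OF U(1) FG _ that])
    fix x assume x: "x \<in> U"
    show "wd G x (A * (f1 x * cnj (f x)) - B * g1 x) (G2 x)"
      unfolding G_def G2_def f1_def g1_def
      by (rule wd_cong[OF wd_diff[OF wd_diff[OF wd_cmult[OF wd_mult[OF wf[OF x] wcf[OF x]]] wd_cmult[OF wg[OF x]]] wd_cmult[OF wcg[OF x]]]]) (simp_all add: algebra_simps)
  qed
  define H where "H x = A * (f1 x * cnj (f1 x))" for x
  define G22 where "G22 x = A * (f x * cnj (f2 x)) - B * cnj (g2 x)" for x
  have s2: "dz (dzb Fc) x = H x" "dzb (dzb Fc) x = G22 x" if "x \<in> U" for x
  proof -
    have w: "wd G2 x (H x) (G22 x)" if x: "x \<in> U" for x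
      unfolding G2_def H_def G22_def f2_def g2_def
      by (rule wd_cong[OF wd_diff[OF wd_cmult[OF wd_mult[OF wf[OF x] wcf1[OF x]]] wd_cmult[OF wcg1[OF x]]]]) (simp_all add: algebra_simps f1_def)
    then show "dz (dzb Fc) x = H x" "dzb (dzb Fc) x = G22 x"
      using wd_on(1,2)[OF U(1) s1 w that] by auto
  qed
  have s3: "dz (dz (dzb Fc)) x = A * (f2 x * cnj (f1 x))" if "x \<in> U" for x
  proof -
    have w: "wd H x (A * (f2 x * cnj (f1 x))) (A * (f1 x * cnj (f2 x)))" if x: "x \<in> U" for x
      unfolding H_def f2_def
      by (rule wd_cong[OF wd_cmult[OF wd_mult[OF wf1[OF x] wcf1[OF x]]]]) (simp_all add: algebra_simps)
    then show ?thesis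
      using wd_on(1)[OF U(1) s2(1) w that] by auto
  qed
  define K where "K x = A * (f1 x * cnj (f2 x))" for x
  have s4: "dz (dzb (dzb Fc)) x = K x" if "x \<in> U" for x
  proof -
    have w: "wd G22 x (K x) (A * (f x * cnj (deriv f2 x)) - B * cnj (deriv g2 x))" if x: "x \<in> U" for x
      unfolding G22_def K_def
      by (rule wd_cong[OF wd_diff[OF wd_cmult[OF wd_mult[OF wf[OF x] wd_cholo_on[OF hf2 U(1) x]]] wd_cmult[OF wd_cholo_on[OF hg2 U(1) x]]]])
        (simp_all add: algebra_simps f1_def)
    then show ?thesis
      using wd_on(1)[OF U(1) s2(2) w that] by auto
  qed
  have s5: "dz (dz (dzb (dzb Fc))) x = A * (f2 x * cnj (f2 x))" if "x \<in> U" for x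
  proof -
    have w: "wd K x (A * (f2 x * cnj (f2 x))) (A * (f1 x * cnj (deriv f2 x)))" if x: "x \<in> U" for x
      unfolding K_def
      by (rule wd_cong[OF wd_cmult[OF wd_mult[OF wf1[OF x] wd_cholo_on[OF hf2 U(1) x]]]]) (simp_all add: algebra_simps f2_def)
    then show ?thesis
      using wd_on(1)[OF U(1) s4 w that] by auto
  qed
  obtain r where r: "r > 0" "ball 0 r \<subseteq> U" using U open_contains_ball by blast
  show ?thesis
  proof (intro exI[of _ r] conjI ballI r(1))
    fix z :: complex assume "z \<in> ball 0 r"
    then have z: "z \<in> U" using r by auto
    show "dz (dz (dzb (dzb Fc))) z * dz (dzb Fc) z - dz (dz (dzb Fc)) z * dz (dzb (dzb Fc)) z = 0"
      using s2(1)[OF z] s3[OF z] s4[OF z] s5[OF z] unfolding H_def K_def by (simp add: algebra_simps)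
  qed
qed



lemma converse_dir:
  fixes F :: "complex \<Rightarrow> real"
  defines "Fc \<equiv> (\<lambda>z. complex_of_real (F z))"
  assumes analytic: "real_analytic_near0 F"
    and nondeg: "\<exists>r>0. \<forall>z\<in>ball 0 r. dz (dzb Fc) z \<noteq> 0"
    and R: "\<exists>r>0. \<forall>z\<in>ball 0 r.
       dz (dz (dzb (dzb Fc))) z * dz (dzb Fc) z - dz (dz (dzb Fc)) z * dz (dzb (dzb Fc)) z = 0"
  shows "rigidly_equiv_sphere_at0 F"
proof -
  obtain c r1 where r1: "r1 > 0" "convc c r1" and Fc1: "\<And>z. z \<in> ball 0 r1 \<Longrightarrow> Fc z = Sc c z"
    using analytic_convc[OF analytic] unfolding Fc_def by metis
  obtain r2 where r2: "r2 > 0" "\<And>z. z \<in> ball 0 r2 \<Longrightarrow> dz (dzb Fc) z \<noteq> 0" using nondeg by blast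
  obtain r3 where r3: "r3 > 0" "\<And>z. z \<in> ball 0 r3 \<Longrightarrow>
       dz (dz (dzb (dzb Fc))) z * dz (dzb Fc) z - dz (dz (dzb Fc)) z * dz (dzb (dzb Fc)) z = 0" using R by blast
  define r0 where "r0 = min r1 (min r2 r3)"
  define B where "B = ball (0::complex) r0"
  have r0: "r0 > 0" using r1 r2 r3 by (simp add: r0_def)
  have oB: "open B" and cB: "convex B" and conB: "connected B" and B0: "0 \<in> B"
    using r0 by (auto simp: B_def intro: convex_connected)
  have Bsub: "x \<in> ball 0 r1" "x \<in> ball 0 r2" "x \<in> ball 0 r3" if "x \<in> B" for x
    using that by (auto simp: B_def r0_def)
  have cv: "convc c r0" using r1(2) by (rule convc_mono) (simp add: r0_def)
  note cvD1 = convc_D1 and cvD2 = convc_D2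
  have F0: "Fc x = Sc c x" if "x \<in> B" for x using Fc1 Bsub[OF that] by blast
  note w0 = convc_wd[OF cv F0[unfolded B_def]]
  have dzbF: "dzb Fc x = Sc (D2 c) x" and dzF: "dz Fc x = Sc (D1 c) x" if "x \<in> B" for x
    using w0(2,3) that by (auto simp: B_def)
  note w1 = convc_wd[OF cvD2[OF cv] dzbF[unfolded B_def]]
  note w1' = convc_wd[OF cvD1[OF cv] dzF[unfolded B_def]]
  define h where "h = dz (dzb Fc)"
  have hS: "h x = Sc (D1 (D2 c)) x" if "x \<in> B" for x
    using w1(2) that by (auto simp: B_def h_def)
  have dzbdzbF: "dzb (dzb Fc) x = Sc (D2 (D2 c)) x" if "x \<in> B" for x
    using w1(3) that by (auto simp: B_def)
  note wh = convc_wd[OF cvD1[OF cvD2[OF cv]] hS[unfolded B_def]]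
  have dzh: "dz h x = Sc (D1 (D1 (D2 c))) x" if "x \<in> B" for x
    using wh(2) that by (auto simp: B_def)
  note wdzh = convc_wd[OF cvD1[OF cvD1[OF cvD2[OF cv]]] dzh[unfolded B_def]]
  note w2 = convc_wd[OF cvD2[OF cvD2[OF cv]] dzbdzbF[unfolded B_def]]
  have K1: "dz (dzb (dzb Fc)) x = Sc (D1 (D2 (D2 c))) x" if "x \<in> B" for x
    using w2(2) that by (auto simp: B_def)
  note wK = convc_wd[OF cvD1[OF cvD2[OF cvD2[OF cv]]] K1[unfolded B_def]]
  have key: "Sc (D2 (D1 (D1 (D2 c)))) x * h x - dz h x * dzb h x = 0" if x: "x \<in> B" for x
  proof -
    have "dz (dz (dzb (dzb Fc))) x = Sc (D2 (D1 (D1 (D2 c)))) x"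
      using wK(2) x by (simp add: B_def D12)
    moreover have "dz (dzb (dzb Fc)) x = dzb h x"
      using K1[OF x] wh(3) x by (simp add: B_def D12)
    ultimately show ?thesis using r3(2)[OF Bsub(3)[OF x]] by (simp add: h_def)
  qed
  have hnz: "h x \<noteq> 0" if "x \<in> B" for x using r2(2)[OF Bsub(2)[OF that]] by (simp add: h_def)
  have Freal: "cnj (Fc x) = Fc x" for x by (simp add: Fc_def)
  have hreal: "cnj (h x) = h x" if x: "x \<in> B" for x
  proof -
    have wF: "wd Fc x (Sc (D1 c) x) (Sc (D2 c) x)" using w0(1) x by (simp add: B_def)
    have e1: "dzb Fc y = cnj (dz Fc y)" if "y \<in> B" for y
      using wd_real[OF w0(1) open_UNIV UNIV_I Freal] that dzF dzbF by (simp add: B_def)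
    have wc: "wd (\<lambda>y. cnj (dz Fc y)) y (cnj (Sc (D2 (D1 c)) y)) (cnj (Sc (D1 (D1 c)) y))" if "y \<in> B" for y
      using wd_cnj[OF w1'(1)] that by (simp add: B_def)
    have "dz (dzb Fc) x = cnj (Sc (D2 (D1 c)) x)"
      by (rule wd_on(1)[OF oB e1 wc x])
    then show ?thesis using hS[OF x] by (simp add: h_def D12)
  qed
  have wh': "wd h x (dz h x) (dzb h x)" if x: "x \<in> B" for x
    using wh(1,2,3) x by (simp add: B_def)
  have hbar: "dzb h x = cnj (dz h x)" if x: "x \<in> B" for x
    by (rule wd_real[OF wh'[OF x] oB x hreal])
  define q where "q x = dz h x * inverse (h x)" for x
  have qh: "dz h x = q x * h x" if x: "x \<in> B" for x
    using hnz[OF x] by (simp add: q_def)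
  have wq: "wd q x (Sc (D1 (D1 (D1 (D2 c)))) x * inverse (h x) + dz h x * (- (inverse (h x) ^ Suc (Suc 0)) * dz h x)) 0"
    if x: "x \<in> B" for x
  proof -
    have w1: "wd (dz h) x (Sc (D1 (D1 (D1 (D2 c)))) x) (Sc (D2 (D1 (D1 (D2 c)))) x)"
      using wdzh(1) x by (simp add: B_def)
    have w2: "wd (\<lambda>x. inverse (h x)) x (- (inverse (h x) ^ Suc (Suc 0)) * dz h x) (- (inverse (h x) ^ Suc (Suc 0)) * dzb h x)"
      by (rule wd_comp[OF DERIV_inverse[OF hnz[OF x]] wh'[OF x]])
    have e: "Sc (D2 (D1 (D1 (D2 c)))) x = dz h x * dzb h x / h x"
      using key[OF x] hnz[OF x] by (simp add: field_simps)
    show ?thesis unfolding q_def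
      by (rule wd_cong[OF wd_mult[OF w1 w2]]) (use hnz[OF x] in \<open>simp_all add: e field_simps power2_eq_square\<close>)
  qed
  have qhol: "q holomorphic_on B"
    using wd_field[OF wq] oB by (auto simp: holomorphic_on_open)
  obtain Q where Q0: "\<And>x. x \<in> B \<Longrightarrow> (Q has_field_derivative q x) (at x within B)"
    using holomorphic_convex_primitive'[OF cB oB qhol] by blast
  have Q: "(Q has_field_derivative q x) (at x)" if "x \<in> B" for x
    using Q0[OF that] at_within_open[OF that oB] by simp
  define E where "E x = exp ((-1) * Q x)" for x
  have wE: "wd E x (exp ((-1) * Q x) * ((-1) * q x)) (exp ((-1) * Q x) * ((-1) * 0))" if x: "x \<in> B" for x
    unfolding E_def by (rule wd_comp[OF DERIV_exp wd_cmult[OF wd_holo[OF Q[OF x]]]])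
  define k where "k x = h x * E x * cnj (E x)" for x
  have wk: "wd k x 0 0" if x: "x \<in> B" for x
    unfolding k_def
    by (rule wd_cong[OF wd_mult[OF wd_mult[OF wh'[OF x] wE[OF x]] wd_cnj[OF wE[OF x]]]])
       (simp_all add: qh[OF x] hbar[OF x] hreal[OF x] E_def algebra_simps)
  obtain lam where lam: "\<And>x. x \<in> B \<Longrightarrow> k x = lam"
    using wd_const_on[OF conB oB wk] unfolding constant_on_def by blast
  have lam0: "lam = k 0" using lam[OF B0] by simp
  have lamnz: "lam \<noteq> 0" using hnz[OF B0] by (simp add: lam0 k_def E_def)
  have lamreal: "cnj lam = lam" using hreal[OF B0] by (simp add: lam0 k_def E_def)
  define \<phi> where "\<phi> x = exp (Q x)" for x
  have \<phi>nz: "\<phi> x \<noteq> 0" for x by (simp add: \<phi>_def)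
  have hform: "h x = lam * \<phi> x * cnj (\<phi> x)" if x: "x \<in> B" for x
  proof -
    have "E x = inverse (\<phi> x)" by (simp add: E_def \<phi>_def exp_minus)
    then have "h x * inverse (\<phi> x) * inverse (cnj (\<phi> x)) = lam"
      using lam[OF x] by (simp add: k_def)
    then show ?thesis using \<phi>nz[of x] by (simp add: field_simps)
  qed
  have w\<phi>: "wd \<phi> x (exp (Q x) * q x) 0" if x: "x \<in> B" for x
    unfolding \<phi>_def using wd_comp[OF DERIV_exp wd_holo[OF Q[OF x]]] by simp
  have \<phi>hol: "\<phi> holomorphic_on B"
    using wd_field[OF w\<phi>] oB by (auto simp: holomorphic_on_open)
  obtain Fp0 where Fp0: "\<And>x. x \<in> B \<Longrightarrow> (Fp0 has_field_derivative \<phi> x) (at x within B)"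
    using holomorphic_convex_primitive'[OF cB oB \<phi>hol] by blast
  have Fp: "(Fp0 has_field_derivative \<phi> x) (at x)" if "x \<in> B" for x
    using Fp0[OF that] at_within_open[OF that oB] by simp
  define \<Lambda> where "\<Lambda> = lam"
  have \<Lambda>real: "cnj \<Lambda> = \<Lambda>" using lamreal by (simp add: \<Lambda>_def)
  define u where "u x = Fc x - \<Lambda> * (Fp0 x * cnj (Fp0 x))" for x
  define v0 where "v0 x = dz Fc x - \<Lambda> * (\<phi> x * cnj (Fp0 x))" for x
  have wu: "wd u x (v0 x) (dzb Fc x - \<Lambda> * (Fp0 x * cnj (\<phi> x)))" if x: "x \<in> B" for x
  proof -
    have wF: "wd Fc x (dz Fc x) (dzb Fc x)" using w0(1) dzF[OF x] dzbF[OF x] x by (simp add: B_def)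
    show ?thesis unfolding u_def v0_def
      by (rule wd_cong[OF wd_diff[OF wF wd_cmult[OF wd_mult[OF wd_holo[OF Fp[OF x]] wd_cnj[OF wd_holo[OF Fp[OF x]]]]]]]) simp_all
  qed
  have ureal: "cnj (u x) = u x" for x
    using \<Lambda>real by (simp add: u_def Freal mult.commute)
  have ub: "dzb Fc x - \<Lambda> * (Fp0 x * cnj (\<phi> x)) = cnj (v0 x)" if x: "x \<in> B" for x
    by (rule wd_real[OF wu[OF x] open_UNIV UNIV_I ureal])
  have wv0: "wd v0 x (Sc (D1 (D1 c)) x - \<Lambda> * (exp (Q x) * q x * cnj (Fp0 x) + \<phi> x * 0)) 0" if x: "x \<in> B" for x
  proof -
    have w1: "wd (dz Fc) x (Sc (D1 (D1 c)) x) (Sc (D2 (D1 c)) x)" using w1'(1) x by (simp add: B_def)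
    have e: "Sc (D2 (D1 c)) x = lam * \<phi> x * cnj (\<phi> x)"
      using hform[OF x] hS[OF x] by (simp add: D12)
    show ?thesis unfolding v0_def
      by (rule wd_cong[OF wd_diff[OF w1 wd_cmult[OF wd_mult[OF w\<phi>[OF x] wd_cnj[OF wd_holo[OF Fp[OF x]]]]]]])
         (use lamnz in \<open>simp_all add: e \<Lambda>_def\<close>)
  qed
  have v0hol: "v0 holomorphic_on B"
    using wd_field[OF wv0] oB by (auto simp: holomorphic_on_open)
  obtain \<Phi>0 where \<Phi>0: "\<And>x. x \<in> B \<Longrightarrow> (\<Phi>0 has_field_derivative v0 x) (at x within B)"
    using holomorphic_convex_primitive'[OF cB oB v0hol] by blast
  have \<Phi>: "(\<Phi>0 has_field_derivative v0 x) (at x)" if "x \<in> B" for x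
    using \<Phi>0[OF that] at_within_open[OF that oB] by simp
  define w where "w x = u x - \<Phi>0 x - cnj (\<Phi>0 x)" for x
  have ww: "wd w x 0 0" if x: "x \<in> B" for x
    unfolding w_def
    by (rule wd_cong[OF wd_diff[OF wd_diff[OF wu[OF x] wd_holo[OF \<Phi>[OF x]]] wd_cnj[OF wd_holo[OF \<Phi>[OF x]]]]])
       (simp_all add: ub[OF x])
  obtain w0 where w0c: "\<And>x. x \<in> B \<Longrightarrow> w x = w0"
    using wd_const_on[OF conB oB ww] unfolding constant_on_def by blast
  define lr where "lr = Re lam"
  have lr: "lam = complex_of_real lr" using lamreal by (simp add: lr_def complex_eq_iff)
  have lrnz: "lr \<noteq> 0" using lamnz lr by auto
  have Fform: "F x = Re w0 + 2 * Re (\<Phi>0 x) + lr * (cmod (Fp0 x))\<^sup>2" if x: "x \<in> B" for x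
  proof -
    have "Fc x = w0 + (\<Phi>0 x + cnj (\<Phi>0 x)) + \<Lambda> * (Fp0 x * cnj (Fp0 x))"
      using w0c[OF x] by (simp add: w_def u_def algebra_simps)
    also have "\<dots> = w0 + complex_of_real (2 * Re (\<Phi>0 x)) + complex_of_real (lr * (cmod (Fp0 x))\<^sup>2)"
      unfolding complex_add_cnj complex_norm_square[symmetric] \<Lambda>_def lr by simp
    finally have "Re (Fc x) = Re (w0 + complex_of_real (2 * Re (\<Phi>0 x)) + complex_of_real (lr * (cmod (Fp0 x))\<^sup>2))"
      by simp
    then show ?thesis by (simp add: Fc_def)
  qed
  have Fphol: "Fp0 holomorphic_on B"
    using Fp oB by (auto simp: holomorphic_on_open)
  have \<Phi>hol: "\<Phi>0 holomorphic_on B"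
    using \<Phi> oB by (auto simp: holomorphic_on_open)
  have "deriv Fp0 0 = \<phi> 0" using Fp[OF B0] by (rule DERIV_imp_deriv)
  then obtain r' where r': "r' > 0" "ball 0 r' \<subseteq> B" "inj_on Fp0 (ball 0 r')"
    using has_complex_derivative_locally_injective[OF Fphol B0 oB] \<phi>nz by metis
  define g where "g x = - complex_of_real (inverse lr) * (2 * \<Phi>0 x + complex_of_real (Re w0))" for x
  have ghol: "g holomorphic_on B" unfolding g_def
    by (intro holomorphic_intros \<Phi>hol)
  show ?thesis
    unfolding rigidly_equiv_sphere_at0_def
  proof (intro exI conjI)
    show "open (ball (0::complex) r')" by simp
    show "0 \<in> ball (0::complex) r'" using r' by simp
    show "Fp0 holomorphic_on ball 0 r'" using holomorphic_on_subset[OF Fphol r'(2)] .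
    show "inj_on Fp0 (ball 0 r')" by (rule r'(3))
    show "g holomorphic_on ball 0 r'" using holomorphic_on_subset[OF ghol r'(2)] .
    show "inverse lr \<noteq> 0" using lrnz by simp
    show "rigid_map Fp0 (inverse lr) g ` (rigid_hyp F \<inter> (ball 0 r' \<times> UNIV)) \<subseteq> heisenberg"
    proof
      fix p assume "p \<in> rigid_map Fp0 (inverse lr) g ` (rigid_hyp F \<inter> (ball 0 r' \<times> UNIV))"
      then obtain z w' where p: "p = rigid_map Fp0 (inverse lr) g (z, w')"
        and zw: "(z, w') \<in> rigid_hyp F" "z \<in> ball 0 r'" by auto
      then have zB: "z \<in> B" using r' by auto
      have Rw: "Re w' = F z" using zw by (simp add: rigid_hyp_def)
      have "Re (complex_of_real (inverse lr) * w' + g z) = inverse lr * F z - inverse lr * (2 * Re (\<Phi>0 z) + Re w0)"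
        using lrnz by (simp add: g_def Rw field_simps)
      also have "\<dots> = (cmod (Fp0 z))\<^sup>2"
        using Fform[OF zB] lrnz by (simp add: field_simps)
      finally show "p \<in> heisenberg"
        by (simp add: p rigid_map_def heisenberg_def)
    qed
  qed
qed


theorem proposition2p8:
  fixes F :: "complex \<Rightarrow> real"
  defines "Fc \<equiv> (\<lambda>z. complex_of_real (F z))"
  assumes analytic: "real_analytic_near0 F"
    and origin: "F 0 = 0"
    and nondeg: "\<exists>r>0. \<forall>z\<in>ball 0 r. dz (dzb Fc) z \<noteq> 0"
  shows "rigidly_equiv_sphere_at0 F \<longleftrightarrow>
    (\<exists>r>0. \<forall>z\<in>ball 0 r.
       dz (dz (dzb (dzb Fc))) z * dz (dzb Fc) z - dz (dz (dzb Fc)) z * dz (dzb (dzb Fc)) z = 0)"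
proof
  assume "rigidly_equiv_sphere_at0 F"
  then show "\<exists>r>0. \<forall>z\<in>ball 0 r.
       dz (dz (dzb (dzb Fc))) z * dz (dzb Fc) z - dz (dz (dzb Fc)) z * dz (dzb (dzb Fc)) z = 0"
    unfolding Fc_def by (rule forward_dir)
next
  assume R: "\<exists>r>0. \<forall>z\<in>ball 0 r.
       dz (dz (dzb (dzb Fc))) z * dz (dzb Fc) z - dz (dz (dzb Fc)) z * dz (dzb (dzb Fc)) z = 0"
  show "rigidly_equiv_sphere_at0 F"
    by (rule converse_dir[OF analytic nondeg[unfolded Fc_def] R[unfolded Fc_def]])
qed

end
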